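(* (a) The following are equivalent: $j(0)=0$; $F(0)=0$; $0\in X_+$; the system $w'(t)=q(v(t))w(t)$, $v'(t)=j(w_t,v_t)-\mu v(t)$, $(w,v)_0=(\varphi,\psi)$ has a zero solution. In either case $X_+\neq\emptyset$. If $j|_{U_+}$ is $C$-continuous at zero, then $F|_{U_+}$ is $C$-continuous at zero. Hence, if $j(0)=0$ and $j|_{U_+}$ is $C$-continuous at zero, then: for $\phi\in X_+$, if $x^\phi_t\to0$ in $C$ then $x^\phi_t\to0$ in $C^1$; if zero is globally attractive in $C$ it is so in $C^1$; for $E\subset X_+$, if zero is stable on $E$ in $C$ then also in $C^1$; and if zero is globally asymptotically stable in $C$ then also in $C^1$. If $j(0)=0$ and $$\forall\,\varepsilon>0\;\exists\,\delta>0\ \text{such that}\ j(\varphi,\psi)\le\varepsilon\ \ \forall\,(\varphi,\psi)\in U_+\ \text{with}\ \|\varphi\|_0\le\delta ,$$ then also: (b) Let $E\subset X_+$ with $0\in E$, and suppose $\|w^{(\varphi,\psi)}_t\|_0\le\|\varphi\|_0$ for all $(\varphi,\psi)\in E$, $t\ge0$. Then zero is stable on $E$ in $C$ and in $C^1$. (c) Let $\phi\in X_+$ and suppose that for $(w,v)=(w,v)^\phi$ one has $w(t)\to0$ as $t\to\infty$. Then $(w,v)_t\to0$ in $C$ and in $C^1$. In particular, if $w\to0$ for all initial data in $X_+$, then zero is globally attractive in both norms.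
   Context: Let $h>0$, $R_-<0$, $I=(R_-,\infty)$, $q:I\to\mathbb{R}$, $\mu>0$, $U=C^1([-h,0],\mathbb{R})\times C^1([-h,0],I)$, $j:U\to\mathbb{R}$, $U_+=C^1([-h,0],\mathbb{R}_+^2)$, $\|\cdot\|_0$ the sup-norm, $\|\phi\|_1=\|\phi\|_0+\|\phi'\|_0$; $x_t(s)=x(t+s)$. Define $F(\varphi,\psi)=(q(\psi(0))\varphi(0),\,j(\varphi,\psi)-\mu\psi(0))$ and $X_+=\{\phi\in C^1([-h,0],\mathbb{R}_+^2):\phi'(0)=F(\phi)\}$. Assume: $j$ is $C^1$ on $U$ with each derivative extending to a linear map on $C([-h,0],\mathbb{R}^2)$ depending continuously on $(\phi,\chi)$; for every bounded $B\subset U_+$ there is $L_B$ with $|j(\phi)-j(\chi)|\le L_B\|\phi-\chi\|_0$ on $B$; $j\ge0$ on $U_+$; $j(B_1\times B_2)$ is bounded whenever $B_1\times B_2\subset U_+$ with $B_1$ bounded; $q$ is bounded and $C^1$. Solutions from $X_+$ exist globally, stay in $X_+$ and define a continuous semiflow. Zero is stable on $E$ if for every $\varepsilon>0$ there is $\delta>0$ with $\|x^\phi_t\|<\varepsilon$ for all $t\ge0$ whenever $\phi\in E$, $\|\phi\|<\delta$. *)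

theory Defs
  imports "HOL-Analysis.Analysis"
begin

text \<open>States (phi, psi) are pairs of real functions; only their values on [-h,0] matter.\<close>
type_synonym st = "(real \<Rightarrow> real) \<times> (real \<Rightarrow> real)"

definition C1on :: "real \<Rightarrow> (real \<Rightarrow> real) \<Rightarrow> bool" where
  "C1on h f \<longleftrightarrow> (\<exists>f'. continuous_on {-h..0} f' \<and>
      (\<forall>s\<in>{-h..0}. (f has_real_derivative f' s) (at s within {-h..0})))"

definition contst :: "real \<Rightarrow> st \<Rightarrow> bool" where
  "contst h p \<longleftrightarrow> continuous_on {-h..0} (fst p) \<and> continuous_on {-h..0} (snd p)"

definition C1st :: "real \<Rightarrow> st \<Rightarrow> bool" where
  "C1st h p \<longleftrightarrow> C1on h (fst p) \<and> C1on h (snd p)"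

definition dr :: "real \<Rightarrow> (real \<Rightarrow> real) \<Rightarrow> real \<Rightarrow> real" where
  "dr h f s = vector_derivative f (at s within {-h..0})"

definition n0 :: "real \<Rightarrow> (real \<Rightarrow> real) \<Rightarrow> real" where
  "n0 h f = Sup ((\<lambda>s. \<bar>f s\<bar>) ` {-h..0})"

definition n1 :: "real \<Rightarrow> (real \<Rightarrow> real) \<Rightarrow> real" where
  "n1 h f = n0 h f + n0 h (dr h f)"

definition N0 :: "real \<Rightarrow> st \<Rightarrow> real" where
  "N0 h p = Sup ((\<lambda>s. norm (fst p s, snd p s)) ` {-h..0})"

definition N1 :: "real \<Rightarrow> st \<Rightarrow> real" where
  "N1 h p = N0 h p + N0 h (dr h (fst p), dr h (snd p))"

definition zst :: st where "zst = (\<lambda>_. 0, \<lambda>_. 0)"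

definition padd :: "st \<Rightarrow> st \<Rightarrow> st" where
  "padd p r = (\<lambda>s. fst p s + fst r s, \<lambda>s. snd p s + snd r s)"

definition psub :: "st \<Rightarrow> st \<Rightarrow> st" where
  "psub p r = (\<lambda>s. fst p s - fst r s, \<lambda>s. snd p s - snd r s)"

definition pscale :: "real \<Rightarrow> st \<Rightarrow> st" where
  "pscale a p = (\<lambda>s. a * fst p s, \<lambda>s. a * snd p s)"

definition seg :: "st \<Rightarrow> real \<Rightarrow> st" where
  "seg x t = (\<lambda>s. fst x (t + s), \<lambda>s. snd x (t + s))"

definition Uset :: "real \<Rightarrow> real \<Rightarrow> st set" where
  "Uset h Rm = {p. C1st h p \<and> (\<forall>s\<in>{-h..0}. snd p s > Rm)}"

definition Uplus :: "real \<Rightarrow> st set" where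
  "Uplus h = {p. C1st h p \<and> (\<forall>s\<in>{-h..0}. fst p s \<ge> 0 \<and> snd p s \<ge> 0)}"

definition Fmap :: "(real \<Rightarrow> real) \<Rightarrow> (st \<Rightarrow> real) \<Rightarrow> real \<Rightarrow> st \<Rightarrow> real \<times> real" where
  "Fmap q j mu p = (q (snd p 0) * fst p 0, j p - mu * snd p 0)"

definition Xplus :: "real \<Rightarrow> (real \<Rightarrow> real) \<Rightarrow> (st \<Rightarrow> real) \<Rightarrow> real \<Rightarrow> st set" where
  "Xplus h q j mu = {p \<in> Uplus h. (dr h (fst p) 0, dr h (snd p) 0) = Fmap q j mu p}"

text \<open>j is C^1 on U (Frechet w.r.t. the C^1 norm, derivative continuous in operator norm),
  each derivative Dj p extends to a linear map on C([-h,0],R^2), and (p,chi) |-> Dj p chi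
  is continuous on U x C.\<close>
definition jC1 :: "real \<Rightarrow> real \<Rightarrow> (st \<Rightarrow> real) \<Rightarrow> (st \<Rightarrow> st \<Rightarrow> real) \<Rightarrow> bool" where
  "jC1 h Rm j Dj \<longleftrightarrow>
    (\<forall>p\<in>Uset h Rm. \<forall>a b c1 c2. contst h c1 \<and> contst h c2 \<longrightarrow>
        Dj p (padd (pscale a c1) (pscale b c2)) = a * Dj p c1 + b * Dj p c2)
  \<and> (\<forall>p\<in>Uset h Rm. \<forall>c r. (\<forall>s\<in>{-h..0}. fst c s = fst r s \<and> snd c s = snd r s) \<longrightarrow> Dj p c = Dj p r)
  \<and> (\<forall>p\<in>Uset h Rm. \<forall>\<epsilon>>0. \<exists>\<delta>>0. \<forall>c. C1st h c \<and> padd p c \<in> Uset h Rm \<and> N1 h c < \<delta> \<longrightarrow>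
        \<bar>j (padd p c) - j p - Dj p c\<bar> \<le> \<epsilon> * N1 h c)
  \<and> (\<forall>p\<in>Uset h Rm. \<forall>\<epsilon>>0. \<exists>\<delta>>0. \<forall>r\<in>Uset h Rm. N1 h (psub r p) < \<delta> \<longrightarrow>
        (\<forall>c. C1st h c \<longrightarrow> \<bar>Dj r c - Dj p c\<bar> \<le> \<epsilon> * N1 h c))
  \<and> (\<forall>p\<in>Uset h Rm. \<forall>c. contst h c \<longrightarrow> (\<forall>\<epsilon>>0. \<exists>\<delta>>0. \<forall>r\<in>Uset h Rm. \<forall>e.
        contst h e \<and> N1 h (psub r p) < \<delta> \<and> N0 h (psub e c) < \<delta> \<longrightarrow> \<bar>Dj r e - Dj p c\<bar> < \<epsilon>))"

definition j_hyps :: "real \<Rightarrow> real \<Rightarrow> (st \<Rightarrow> real) \<Rightarrow> bool" where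
  "j_hyps h Rm j \<longleftrightarrow>
    (\<forall>p r. (\<forall>s\<in>{-h..0}. fst p s = fst r s \<and> snd p s = snd r s) \<longrightarrow> j p = j r)
  \<and> (\<exists>Dj. jC1 h Rm j Dj)
  \<and> (\<forall>B \<subseteq> Uplus h. (\<exists>M. \<forall>p\<in>B. N1 h p \<le> M) \<longrightarrow>
        (\<exists>L. \<forall>p\<in>B. \<forall>r\<in>B. \<bar>j p - j r\<bar> \<le> L * N0 h (psub p r)))
  \<and> (\<forall>p\<in>Uplus h. j p \<ge> 0)
  \<and> (\<forall>B1 B2. B1 \<times> B2 \<subseteq> Uplus h \<longrightarrow> (\<exists>M. \<forall>f\<in>B1. n1 h f \<le> M) \<longrightarrow>
        (\<exists>K. \<forall>p\<in>B1 \<times> B2. \<bar>j p\<bar> \<le> K))"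

definition q_hyps :: "real \<Rightarrow> (real \<Rightarrow> real) \<Rightarrow> bool" where
  "q_hyps Rm q \<longleftrightarrow> (\<exists>M. \<forall>x>Rm. \<bar>q x\<bar> \<le> M) \<and>
     (\<exists>q'. continuous_on {Rm<..} q' \<and> (\<forall>x>Rm. (q has_real_derivative q' x) (at x)))"

definition is_sol :: "real \<Rightarrow> real \<Rightarrow> (real \<Rightarrow> real) \<Rightarrow> (st \<Rightarrow> real) \<Rightarrow> real \<Rightarrow> st \<Rightarrow> st \<Rightarrow> bool" where
  "is_sol h Rm q j mu p x \<longleftrightarrow>
    (\<forall>s\<in>{-h..0}. fst x s = fst p s \<and> snd x s = snd p s)
  \<and> (\<forall>t\<ge>-h. snd x t > Rm)
  \<and> (\<exists>w' v'. continuous_on {-h..} w' \<and> continuous_on {-h..} v' \<and>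
      (\<forall>t\<ge>-h. (fst x has_real_derivative w' t) (at t within {-h..}) \<and>
               (snd x has_real_derivative v' t) (at t within {-h..})) \<and>
      (\<forall>t\<ge>0. w' t = q (snd x t) * fst x t \<and> v' t = j (seg x t) - mu * snd x t))"

definition semiflow_hyps :: "real \<Rightarrow> real \<Rightarrow> (real \<Rightarrow> real) \<Rightarrow> (st \<Rightarrow> real) \<Rightarrow> real \<Rightarrow> (st \<Rightarrow> st) \<Rightarrow> bool" where
  "semiflow_hyps h Rm q j mu sol \<longleftrightarrow>
    (\<forall>p\<in>Xplus h q j mu. is_sol h Rm q j mu p (sol p) \<and> (\<forall>t\<ge>0. seg (sol p) t \<in> Xplus h q j mu))
  \<and> (\<forall>p\<in>Xplus h q j mu. \<forall>x. is_sol h Rm q j mu p x \<longrightarrow>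
        (\<forall>t\<ge>-h. fst x t = fst (sol p) t \<and> snd x t = snd (sol p) t))
  \<and> (\<forall>t0\<ge>0. \<forall>p\<in>Xplus h q j mu. \<forall>\<epsilon>>0. \<exists>\<delta>>0. \<forall>t\<ge>0. \<forall>r\<in>Xplus h q j mu.
        \<bar>t - t0\<bar> < \<delta> \<and> N1 h (psub r p) < \<delta> \<longrightarrow> N1 h (psub (seg (sol r) t) (seg (sol p) t0)) < \<epsilon>)"

text \<open>Dynamical notions, w.r.t. a norm N (N0 h for C, N1 h for C^1).\<close>
definition stable_on :: "(st \<Rightarrow> real) \<Rightarrow> (st \<Rightarrow> st) \<Rightarrow> st set \<Rightarrow> bool" where
  "stable_on N sol E \<longleftrightarrow> (\<forall>\<epsilon>>0. \<exists>\<delta>>0. \<forall>p\<in>E. N p < \<delta> \<longrightarrow> (\<forall>t\<ge>0. N (seg (sol p) t) < \<epsilon>))"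

definition conv_zero :: "(st \<Rightarrow> real) \<Rightarrow> (st \<Rightarrow> st) \<Rightarrow> st \<Rightarrow> bool" where
  "conv_zero N sol p \<longleftrightarrow> ((\<lambda>t. N (seg (sol p) t)) \<longlongrightarrow> 0) at_top"

definition glob_attr :: "(st \<Rightarrow> real) \<Rightarrow> (st \<Rightarrow> st) \<Rightarrow> st set \<Rightarrow> bool" where
  "glob_attr N sol X \<longleftrightarrow> (\<forall>p\<in>X. conv_zero N sol p)"

definition GAS :: "(st \<Rightarrow> real) \<Rightarrow> (st \<Rightarrow> st) \<Rightarrow> st set \<Rightarrow> bool" where
  "GAS N sol X \<longleftrightarrow> stable_on N sol X \<and> glob_attr N sol X"

definition j_Ccont0 :: "real \<Rightarrow> (st \<Rightarrow> real) \<Rightarrow> bool" where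
  "j_Ccont0 h j \<longleftrightarrow> (\<forall>\<epsilon>>0. \<exists>\<delta>>0. \<forall>p\<in>Uplus h. N0 h p < \<delta> \<longrightarrow> \<bar>j p - j zst\<bar> < \<epsilon>)"

definition F_Ccont0 :: "real \<Rightarrow> (real \<Rightarrow> real) \<Rightarrow> (st \<Rightarrow> real) \<Rightarrow> real \<Rightarrow> bool" where
  "F_Ccont0 h q j mu \<longleftrightarrow> (\<forall>\<epsilon>>0. \<exists>\<delta>>0. \<forall>p\<in>Uplus h. N0 h p < \<delta> \<longrightarrow>
      norm (Fmap q j mu p - Fmap q j mu zst) < \<epsilon>)"

end

theory Submission
  imports Defs
begin


lemma dr_eq:
  assumes "h > 0" "s \<in> {-h..0}" "(f has_real_derivative d) (at s within {-h..0})"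
  shows "dr h f s = d"
  unfolding dr_def
  using vector_derivative_within_cbox[of "-h" 0 s f d] assms
  by (simp add: has_real_derivative_iff_has_vector_derivative)

lemma C1on_cont:
  assumes "h > 0" "C1on h f"
  shows "continuous_on {-h..0} f" "continuous_on {-h..0} (dr h f)"
proof -
  obtain f' where c: "continuous_on {-h..0} f'"
    and d: "\<forall>s\<in>{-h..0}. (f has_real_derivative f' s) (at s within {-h..0})"
    using assms(2) unfolding C1on_def by blast
  show "continuous_on {-h..0} f"
    by (rule continuous_on_vector_derivative) (use d in \<open>auto simp: has_real_derivative_iff_has_vector_derivative\<close>)
  have "\<forall>s\<in>{-h..0}. dr h f s = f' s" using d dr_eq[OF assms(1)] by blast
  then show "continuous_on {-h..0} (dr h f)" using continuous_on_eq[OF c] by auto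
qed

lemma N0_upper:
  assumes "h \<ge> 0" "\<forall>s\<in>{-h..0}. norm (fst r s, snd r s) \<le> A"
  shows "N0 h r \<le> A"
  unfolding N0_def using assms by (intro cSup_least) auto

lemma n0_upper:
  assumes "h \<ge> 0" "\<forall>s\<in>{-h..0}. \<bar>f s\<bar> \<le> A"
  shows "n0 h f \<le> A"
  unfolding n0_def using assms by (intro cSup_least) auto

lemma N0_lower:
  assumes "continuous_on {-h..0} (fst r)" "continuous_on {-h..0} (snd r)" "s \<in> {-h..0}"
  shows "norm (fst r s, snd r s) \<le> N0 h r"
proof -
  have "continuous_on {-h..0} (\<lambda>s. norm (fst r s, snd r s))"
    using assms by (intro continuous_intros) auto
  then have "bdd_above ((\<lambda>s. norm (fst r s, snd r s)) ` {-h..0})"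
    by (intro bounded_imp_bdd_above compact_imp_bounded compact_continuous_image) auto
  then show ?thesis unfolding N0_def using assms(3) by (intro cSup_upper) auto
qed

lemma n0_lower:
  assumes "continuous_on {-h..0} f" "s \<in> {-h..0}"
  shows "\<bar>f s\<bar> \<le> n0 h f"
proof -
  have "continuous_on {-h..0} (\<lambda>s. \<bar>f s\<bar>)"
    using assms by (intro continuous_intros) auto
  then have "bdd_above ((\<lambda>s. \<bar>f s\<bar>) ` {-h..0})"
    by (intro bounded_imp_bdd_above compact_imp_bounded compact_continuous_image) auto
  then show ?thesis unfolding n0_def using assms(2) by (intro cSup_upper) auto
qed

lemma Uplus_bounds:
  assumes h: "h > 0" and p: "p \<in> Uplus h"
  shows "\<And>s. s\<in>{-h..0} \<Longrightarrow> norm (fst p s, snd p s) \<le> N0 h p"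
    and "\<And>s. s\<in>{-h..0} \<Longrightarrow> \<bar>fst p s\<bar> \<le> N0 h p"
    and "\<And>s. s\<in>{-h..0} \<Longrightarrow> \<bar>snd p s\<bar> \<le> N0 h p"
    and "\<And>s. s\<in>{-h..0} \<Longrightarrow> norm (dr h (fst p) s, dr h (snd p) s) \<le> N0 h (dr h (fst p), dr h (snd p))"
    and "0 \<le> N0 h p" and "N0 h p \<le> N1 h p"
    and "\<And>s. s\<in>{-h..0} \<Longrightarrow> norm (dr h (fst p) s, dr h (snd p) s) \<le> N1 h p"
    and "\<And>s. s\<in>{-h..0} \<Longrightarrow> \<bar>fst p s\<bar> \<le> n0 h (fst p)"
    and "n0 h (fst p) \<le> N0 h p"
proof -
  have c1: "C1on h (fst p)" "C1on h (snd p)" using p unfolding Uplus_def C1st_def by auto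
  note cs = C1on_cont[OF h c1(1)] C1on_cont[OF h c1(2)]
  show A: "norm (fst p s, snd p s) \<le> N0 h p" if "s\<in>{-h..0}" for s
    using N0_lower[of h p s] cs that by auto
  show B: "\<bar>fst p s\<bar> \<le> N0 h p" if "s\<in>{-h..0}" for s
    using A[OF that] norm_fst_le[of "fst p s" "snd p s"] by simp
  show "\<bar>snd p s\<bar> \<le> N0 h p" if "s\<in>{-h..0}" for s
    using A[OF that] norm_snd_le[of "snd p s" "fst p s"] by simp
  show D: "norm (dr h (fst p) s, dr h (snd p) s) \<le> N0 h (dr h (fst p), dr h (snd p))" if "s\<in>{-h..0}" for s
    using N0_lower[of h "(dr h (fst p), dr h (snd p))" s] cs that by auto
  have m0: "(0::real) \<in> {-h..0}" using h by auto
  show P: "0 \<le> N0 h p" using A[OF m0] norm_ge_zero order_trans by blast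
  have "0 \<le> N0 h (dr h (fst p), dr h (snd p))" using D[OF m0] norm_ge_zero order_trans by blast
  then show Q: "N0 h p \<le> N1 h p" unfolding N1_def by simp
  show "norm (dr h (fst p) s, dr h (snd p) s) \<le> N1 h p" if "s\<in>{-h..0}" for s
    using D[OF that] P unfolding N1_def by simp
  show "\<bar>fst p s\<bar> \<le> n0 h (fst p)" if "s\<in>{-h..0}" for s
    using n0_lower[of h "fst p" s] cs that by auto
  show "n0 h (fst p) \<le> N0 h p" using B h by (intro n0_upper) auto
qed

lemma dr_shift:
  assumes h: "h > 0" and t: "t \<ge> 0" and s: "s \<in> {-h..0}"
    and d: "(f has_real_derivative d) (at (t+s) within {-h..})"
  shows "dr h (\<lambda>s. f (t+s)) s = d"
proof -
  have sub: "(+) t ` {-h..0} \<subseteq> {-h..}" using t by auto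
  have "(f has_real_derivative d) (at ((+) t s) within (+) t ` {-h..0})"
    using has_field_derivative_subset[OF d sub] by simp
  moreover have "((+) t has_real_derivative 1) (at s within {-h..0})"
    by (auto intro!: derivative_eq_intros)
  ultimately have "(f \<circ> (+) t has_real_derivative d * 1) (at s within {-h..0})"
    by (rule DERIV_image_chain)
  then show ?thesis using dr_eq[OF h s] by (simp add: o_def)
qed

lemma dr_init:
  assumes h: "h > 0" and u: "u \<in> {-h..0}"
    and d: "(f has_real_derivative d) (at u within {-h..})"
    and eq: "\<forall>s\<in>{-h..0}. f s = g s"
  shows "dr h g u = d"
proof -
  have "(f has_real_derivative d) (at u within {-h..0})"
    using has_field_derivative_subset[OF d] by auto
  then have "(g has_real_derivative d) (at u within {-h..0})"
    by (rule has_field_derivative_transform_within[where d=1]) (use u eq in auto)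
  then show ?thesis using dr_eq[OF h u] by simp
qed

lemma cmp:
  fixes v v' :: "real \<Rightarrow> real"
  assumes mu: "mu > 0"
    and d: "\<And>y. y \<ge> T \<Longrightarrow> (v has_real_derivative v' y) (at y)"
    and le: "\<And>y. y \<ge> T \<Longrightarrow> v' y \<le> c - mu * v y"
    and u: "u \<ge> T"
  shows "v u \<le> c/mu + (v T - c/mu) * exp (-(mu*(u-T)))"
proof -
  define g where "g y = (v y - c/mu) * exp (mu*y)" for y
  have "g u \<le> g T"
  proof (rule DERIV_nonpos_imp_nonincreasing[OF u])
    fix y assume y: "T \<le> y" "y \<le> u"
    have "(g has_real_derivative (v' y * exp (mu*y) + (v y - c/mu) * (exp (mu*y) * mu))) (at y)"
      unfolding g_def using d[OF y(1)] by (auto intro!: derivative_eq_intros)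
    moreover have "v' y * exp (mu*y) + (v y - c/mu) * (exp (mu*y) * mu) = (v' y + mu * v y - c) * exp (mu*y)"
      using mu by (simp add: field_simps)
    moreover have "(v' y + mu * v y - c) * exp (mu*y) \<le> 0"
      using le[OF y(1)] by (intro mult_nonpos_nonneg) auto
    ultimately show "\<exists>z. (g has_real_derivative z) (at y) \<and> z \<le> 0" by auto
  qed
  then have "(v u - c/mu) * exp (mu*u) \<le> (v T - c/mu) * exp (mu*T)" unfolding g_def .
  then have "(v u - c/mu) * exp (mu*u) * exp (-(mu*u)) \<le> (v T - c/mu) * exp (mu*T) * exp (-(mu*u))"
    by (intro mult_right_mono) auto
  moreover have "exp (mu*u) * exp (-(mu*u)) = 1" by (simp add: exp_minus)
  moreover have "exp (mu*T) * exp (-(mu*u)) = exp (-(mu*(u-T)))"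
    by (simp add: exp_add[symmetric] algebra_simps)
  ultimately have "v u - c/mu \<le> (v T - c/mu) * exp (-(mu*(u-T)))"
    by (simp add: mult.assoc)
  then show ?thesis by simp
qed




context
  fixes h Rm mu :: real and q :: "real \<Rightarrow> real" and j :: "st \<Rightarrow> real" and sol :: "st \<Rightarrow> st"
  assumes h: "h > 0" and Rm: "Rm < 0" and mu: "mu > 0" and sf: "semiflow_hyps h Rm q j mu sol"
begin

lemma sol_basic:
  assumes p: "p \<in> Xplus h q j mu"
  shows "is_sol h Rm q j mu p (sol p)" "\<And>t. t \<ge> 0 \<Longrightarrow> seg (sol p) t \<in> Xplus h q j mu"
  using sf p unfolding semiflow_hyps_def by auto

lemma X_Uplus: "Xplus h q j mu \<subseteq> Uplus h"
  unfolding Xplus_def by auto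

lemma seg_Uplus: "p \<in> Xplus h q j mu \<Longrightarrow> t \<ge> 0 \<Longrightarrow> seg (sol p) t \<in> Uplus h"
  using sol_basic X_Uplus by blast

lemma sol_derivs:
  assumes p: "p \<in> Xplus h q j mu"
  shows "\<exists>w' v'. (\<forall>u\<ge>-h. (fst (sol p) has_real_derivative w' u) (at u within {-h..}) \<and>
                          (snd (sol p) has_real_derivative v' u) (at u within {-h..})) \<and>
          (\<forall>u\<ge>0. w' u = q (snd (sol p) u) * fst (sol p) u \<and> v' u = j (seg (sol p) u) - mu * snd (sol p) u)"
  using sol_basic(1)[OF p] unfolding is_sol_def by blast

lemma sol_init:
  assumes p: "p \<in> Xplus h q j mu" and s: "s \<in> {-h..0}"
  shows "fst (sol p) s = fst p s" "snd (sol p) s = snd p s"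
  using sol_basic(1)[OF p] s unfolding is_sol_def by auto

lemma dr_seg:
  assumes p: "p \<in> Xplus h q j mu" and t: "t \<ge> 0" and s: "s \<in> {-h..0}"
  shows "dr h (fst (seg (sol p) t)) s = (if t+s < 0 then dr h (fst p) (t+s) else q (snd (sol p) (t+s)) * fst (sol p) (t+s))"
    and "dr h (snd (seg (sol p) t)) s = (if t+s < 0 then dr h (snd p) (t+s) else j (seg (sol p) (t+s)) - mu * snd (sol p) (t+s))"
proof -
  obtain w' v' where D: "\<forall>u\<ge>-h. (fst (sol p) has_real_derivative w' u) (at u within {-h..}) \<and>
                          (snd (sol p) has_real_derivative v' u) (at u within {-h..})"
    and E: "\<forall>u\<ge>0. w' u = q (snd (sol p) u) * fst (sol p) u \<and> v' u = j (seg (sol p) u) - mu * snd (sol p) u"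
    using sol_derivs[OF p] by blast
  have u: "t + s \<ge> -h" using t s by auto
  have f1: "fst (seg (sol p) t) = (\<lambda>s. fst (sol p) (t+s))" "snd (seg (sol p) t) = (\<lambda>s. snd (sol p) (t+s))"
    by (auto simp: seg_def)
  have a1: "dr h (fst (seg (sol p) t)) s = w' (t+s)" unfolding f1 using dr_shift[OF h t s] D u by blast
  have a2: "dr h (snd (seg (sol p) t)) s = v' (t+s)" unfolding f1 using dr_shift[OF h t s] D u by blast
  show "dr h (fst (seg (sol p) t)) s = (if t+s < 0 then dr h (fst p) (t+s) else q (snd (sol p) (t+s)) * fst (sol p) (t+s))"
  proof (cases "t+s < 0")
    case True
    then have us: "t+s \<in> {-h..0}" using u by auto
    have "dr h (fst p) (t+s) = w' (t+s)"
      using dr_init[OF h us, of "fst (sol p)" "w' (t+s)" "fst p"] D u sol_init[OF p] by auto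
    then show ?thesis using True a1 by simp
  next
    case False then show ?thesis using a1 E by simp
  qed
  show "dr h (snd (seg (sol p) t)) s = (if t+s < 0 then dr h (snd p) (t+s) else j (seg (sol p) (t+s)) - mu * snd (sol p) (t+s))"
  proof (cases "t+s < 0")
    case True
    then have us: "t+s \<in> {-h..0}" using u by auto
    have "dr h (snd p) (t+s) = v' (t+s)"
      using dr_init[OF h us, of "snd (sol p)" "v' (t+s)" "snd p"] D u sol_init[OF p] by auto
    then show ?thesis using True a2 by simp
  next
    case False then show ?thesis using a2 E by simp
  qed
qed

lemma v_deriv:
  assumes p: "p \<in> Xplus h q j mu" and u: "u \<ge> 0"
  shows "(snd (sol p) has_real_derivative (j (seg (sol p) u) - mu * snd (sol p) u)) (at u)"
proof -
  obtain w' v' where D: "\<forall>u\<ge>-h. (fst (sol p) has_real_derivative w' u) (at u within {-h..}) \<and>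
                          (snd (sol p) has_real_derivative v' u) (at u within {-h..})"
    and E: "\<forall>u\<ge>0. w' u = q (snd (sol p) u) * fst (sol p) u \<and> v' u = j (seg (sol p) u) - mu * snd (sol p) u"
    using sol_derivs[OF p] by blast
  have "(snd (sol p) has_real_derivative v' u) (at u within {-h..})" using D u h by auto
  then have "(snd (sol p) has_real_derivative v' u) (at u within {-h<..})"
    by (rule has_field_derivative_subset) auto
  moreover have "at u within {-h<..} = at u" using u h by (intro at_within_open) auto
  ultimately show ?thesis using E u by simp
qed

lemma seg_vals:
  assumes p: "p \<in> Xplus h q j mu" and t: "t \<ge> 0" and s: "s \<in> {-h..0}"
  shows "\<bar>fst (sol p) (t+s)\<bar> \<le> N0 h (seg (sol p) t)" "\<bar>snd (sol p) (t+s)\<bar> \<le> N0 h (seg (sol p) t)"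
    "0 \<le> fst (sol p) (t+s)" "0 \<le> snd (sol p) (t+s)"
    "n0 h (fst (seg (sol p) t)) \<le> N0 h (seg (sol p) t)"
    "\<bar>fst (sol p) (t+s)\<bar> \<le> n0 h (fst (seg (sol p) t))"
proof -
  have U: "seg (sol p) t \<in> Uplus h" using seg_Uplus[OF p t] .
  have e: "fst (seg (sol p) t) s = fst (sol p) (t+s)" "snd (seg (sol p) t) s = snd (sol p) (t+s)"
    by (auto simp: seg_def)
  show "\<bar>fst (sol p) (t+s)\<bar> \<le> N0 h (seg (sol p) t)" using Uplus_bounds(2)[OF h U s] e by simp
  show "\<bar>snd (sol p) (t+s)\<bar> \<le> N0 h (seg (sol p) t)" using Uplus_bounds(3)[OF h U s] e by simp
  have "0 \<le> fst (seg (sol p) t) s \<and> 0 \<le> snd (seg (sol p) t) s" using U s unfolding Uplus_def by blast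
  then show "0 \<le> fst (sol p) (t+s)" "0 \<le> snd (sol p) (t+s)" using e by auto
  show "n0 h (fst (seg (sol p) t)) \<le> N0 h (seg (sol p) t)" using Uplus_bounds(9)[OF h U] .
  show "\<bar>fst (sol p) (t+s)\<bar> \<le> n0 h (fst (seg (sol p) t))" using Uplus_bounds(8)[OF h U s] e by simp
qed

lemma seg_vals0:
  assumes p: "p \<in> Xplus h q j mu" and t: "t \<ge> 0"
  shows "\<bar>fst (sol p) t\<bar> \<le> N0 h (seg (sol p) t)" "\<bar>snd (sol p) t\<bar> \<le> N0 h (seg (sol p) t)"
    "0 \<le> snd (sol p) t" "\<bar>fst (sol p) t\<bar> \<le> n0 h (fst (seg (sol p) t))"
  using seg_vals[OF p t, of 0] h by auto

lemma dnorm_bound: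
  assumes p: "p \<in> Xplus h q j mu" and t: "t \<ge> 0" and s: "s \<in> {-h..0}"
    and qM: "\<forall>y>Rm. \<bar>q y\<bar> \<le> M"
  shows "norm (dr h (fst (seg (sol p) t)) s, dr h (snd (seg (sol p) t)) s) \<le>
     (if t+s < 0 then N1 h p else M * \<bar>fst (sol p) (t+s)\<bar> + \<bar>j (seg (sol p) (t+s))\<bar> + mu * \<bar>snd (sol p) (t+s)\<bar>)"
proof (cases "t+s < 0")
  case True
  then have us: "t+s \<in> {-h..0}" using t s by auto
  have U: "p \<in> Uplus h" using p X_Uplus by auto
  show ?thesis using Uplus_bounds(7)[OF h U us] True dr_seg[OF p t s] by simp
next
  case False
  then have u0: "t + s \<ge> 0" by simp
  have "snd (sol p) (t+s) \<ge> 0" using seg_vals0(3)[OF p u0] .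
  then have qb: "\<bar>q (snd (sol p) (t+s))\<bar> \<le> M" using qM Rm by auto
  let ?a = "q (snd (sol p) (t+s)) * fst (sol p) (t+s)"
  let ?b = "j (seg (sol p) (t+s)) - mu * snd (sol p) (t+s)"
  have "norm (?a, ?b) \<le> norm ?a + norm ?b" by (rule norm_Pair_le)
  also have "norm ?a \<le> M * \<bar>fst (sol p) (t+s)\<bar>"
    using qb by (simp add: abs_mult mult_right_mono)
  also have "norm ?b \<le> \<bar>j (seg (sol p) (t+s))\<bar> + mu * \<bar>snd (sol p) (t+s)\<bar>"
  proof -
    have "norm ?b \<le> \<bar>j (seg (sol p) (t+s))\<bar> + \<bar>mu * snd (sol p) (t+s)\<bar>"
      using abs_triangle_ineq4 by simp
    then show ?thesis using mu by (simp add: abs_mult)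
  qed
  finally show ?thesis using False dr_seg[OF p t s] by simp
qed

lemma N1_seg_le:
  assumes "\<forall>s\<in>{-h..0}. norm (dr h (fst (seg (sol p) t)) s, dr h (snd (seg (sol p) t)) s) \<le> D"
  shows "N1 h (seg (sol p) t) \<le> N0 h (seg (sol p) t) + D"
proof -
  have "N0 h (dr h (fst (seg (sol p) t)), dr h (snd (seg (sol p) t))) \<le> D"
    using assms h by (intro N0_upper) auto
  then show ?thesis unfolding N1_def by simp
qed

lemma N0_seg_le:
  assumes "\<forall>s\<in>{-h..0}. \<bar>fst x (t+s)\<bar> \<le> a \<and> \<bar>snd x (t+s)\<bar> \<le> b"
  shows "N0 h (seg x t) \<le> a + b"
proof (rule N0_upper)
  show "0 \<le> h" using h by simp
  show "\<forall>s\<in>{-h..0}. norm (fst (seg x t) s, snd (seg x t) s) \<le> a + b"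
  proof
    fix s assume s: "s \<in> {-h..0}"
    have "norm (fst (seg x t) s, snd (seg x t) s) \<le> norm (fst (seg x t) s) + norm (snd (seg x t) s)"
      by (rule norm_Pair_le)
    moreover have "\<bar>fst x (t+s)\<bar> \<le> a" "\<bar>snd x (t+s)\<bar> \<le> b" using assms s by auto
    ultimately show "norm (fst (seg x t) s, snd (seg x t) s) \<le> a + b" by (simp add: seg_def)
  qed
qed

lemma tail:
  assumes p: "p \<in> Xplus h q j mu" and qM: "\<forall>y>Rm. \<bar>q y\<bar> \<le> M" and M: "M \<ge> 0" and T: "T \<ge> 0"
    and B: "\<forall>u\<ge>T. \<bar>fst (sol p) u\<bar> \<le> a \<and> \<bar>snd (sol p) u\<bar> \<le> b \<and> \<bar>j (seg (sol p) u)\<bar> \<le> c"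
    and t: "t \<ge> T + h"
  shows "N0 h (seg (sol p) t) \<le> a + b" "N1 h (seg (sol p) t) \<le> a + b + (M*a + c + mu*b)"
proof -
  have t0: "t \<ge> 0" using t T h by simp
  show n0: "N0 h (seg (sol p) t) \<le> a + b"
  proof (rule N0_seg_le, intro ballI)
    fix s :: real assume "s \<in> {-h..0}"
    then have "t + s \<ge> T" using t by auto
    then show "\<bar>fst (sol p) (t+s)\<bar> \<le> a \<and> \<bar>snd (sol p) (t+s)\<bar> \<le> b" using B by blast
  qed
  have "\<forall>s\<in>{-h..0}. norm (dr h (fst (seg (sol p) t)) s, dr h (snd (seg (sol p) t)) s) \<le> M*a + c + mu*b"
  proof
    fix s assume s: "s \<in> {-h..0}"
    have ts: "t + s \<ge> T" "\<not> t+s < 0" using t s T by auto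
    have "M * \<bar>fst (sol p) (t+s)\<bar> \<le> M * a" using B ts M by (intro mult_left_mono) auto
    moreover have "mu * \<bar>snd (sol p) (t+s)\<bar> \<le> mu * b" using B ts mu by (intro mult_left_mono) auto
    moreover have "\<bar>j (seg (sol p) (t+s))\<bar> \<le> c" using B ts by auto
    ultimately show "norm (dr h (fst (seg (sol p) t)) s, dr h (snd (seg (sol p) t)) s) \<le> M*a + c + mu*b"
      using dnorm_bound[OF p t0 s qM] ts by auto
  qed
  from N1_seg_le[OF this] n0 show "N1 h (seg (sol p) t) \<le> a + b + (M*a + c + mu*b)" by simp
qed

lemma stabN1:
  assumes p: "p \<in> Xplus h q j mu" and qM: "\<forall>y>Rm. \<bar>q y\<bar> \<le> M" and M: "M \<ge> 0"
    and B: "\<forall>u\<ge>0. \<bar>fst (sol p) u\<bar> \<le> a \<and> \<bar>snd (sol p) u\<bar> \<le> b \<and> \<bar>j (seg (sol p) u)\<bar> \<le> c"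
    and t: "t \<ge> 0"
  shows "N1 h (seg (sol p) t) \<le> N0 h (seg (sol p) t) + max (N1 h p) (M*a + c + mu*b)"
proof -
  have "\<forall>s\<in>{-h..0}. norm (dr h (fst (seg (sol p) t)) s, dr h (snd (seg (sol p) t)) s) \<le> max (N1 h p) (M*a + c + mu*b)"
  proof
    fix s assume s: "s \<in> {-h..0}"
    show "norm (dr h (fst (seg (sol p) t)) s, dr h (snd (seg (sol p) t)) s) \<le> max (N1 h p) (M*a + c + mu*b)"
    proof (cases "t+s < 0")
      case True then show ?thesis using dnorm_bound[OF p t s qM] by simp
    next
      case False
      have "M * \<bar>fst (sol p) (t+s)\<bar> \<le> M * a" using B False M by (intro mult_left_mono) auto
      moreover have "mu * \<bar>snd (sol p) (t+s)\<bar> \<le> mu * b" using B False mu by (intro mult_left_mono) auto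
      moreover have "\<bar>j (seg (sol p) (t+s))\<bar> \<le> c" using B False by auto
      ultimately have "norm (dr h (fst (seg (sol p) t)) s, dr h (snd (seg (sol p) t)) s) \<le> M*a + c + mu*b"
        using dnorm_bound[OF p t s qM] False by auto
      then show ?thesis by (rule order_trans) (rule max.cobounded2)
    qed
  qed
  from N1_seg_le[OF this] show ?thesis .
qed

end



lemma zst_facts:
  assumes h: "h > 0"
  shows "Fmap q j mu zst = (0, j zst)" "zst \<in> Uplus h" "dr h (\<lambda>_. 0) 0 = 0" "\<And>t. seg zst t = zst"
    "fst zst = (\<lambda>_. 0)" "snd zst = (\<lambda>_. 0)"
proof -
  show "Fmap q j mu zst = (0, j zst)" by (simp add: Fmap_def zst_def)
  have c: "C1on h (\<lambda>_. 0)" unfolding C1on_def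
    by (rule exI[of _ "\<lambda>_. 0"]) auto
  then show "zst \<in> Uplus h" by (simp add: Uplus_def C1st_def zst_def)
  show "dr h (\<lambda>_. 0) 0 = 0" using h by (intro dr_eq) auto
  show "\<And>t. seg zst t = zst" by (simp add: seg_def zst_def)
  show "fst zst = (\<lambda>_. 0)" "snd zst = (\<lambda>_. 0)" by (simp_all add: zst_def)
qed

lemma zst_X:
  assumes h: "h > 0"
  shows "zst \<in> Xplus h q j mu \<longleftrightarrow> j zst = 0"
  using zst_facts(1)[OF h, of q j mu] zst_facts(2-6)[OF h] unfolding Xplus_def by auto

lemma zst_sol:
  assumes h: "h > 0" and Rm: "Rm < 0"
  shows "is_sol h Rm q j mu zst zst \<longleftrightarrow> j zst = 0"
proof
  assume "is_sol h Rm q j mu zst zst"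
  then obtain w' v' where D: "\<forall>t\<ge>-h. (snd zst has_real_derivative v' t) (at t within {-h..})"
    and E: "\<forall>t\<ge>0. v' t = j (seg zst t) - mu * snd zst t"
    unfolding is_sol_def by blast
  have "((\<lambda>_. 0) has_real_derivative v' 0) (at 0 within {-h..})"
    using D h zst_facts[OF h] by auto
  then have "dr h (\<lambda>_. 0) 0 = v' 0"
    using h by (intro dr_init[where f="\<lambda>_. 0"]) auto
  then have "v' 0 = 0" using zst_facts[OF h] by simp
  then show "j zst = 0" using E zst_facts[OF h] by simp
next
  assume j0: "j zst = 0"
  show "is_sol h Rm q j mu zst zst"
    unfolding is_sol_def
    by (rule conjI, simp, rule conjI, simp add: zst_def Rm,
        rule exI[of _ "\<lambda>_. 0"], rule exI[of _ "\<lambda>_. 0"])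
       (auto simp: zst_facts[OF h] j0)
qed

lemma F_cont:
  assumes h: "h > 0" and Rm: "Rm < 0" and mu: "mu > 0" and qM: "\<forall>y>Rm. \<bar>q y\<bar> \<le> M" and M: "M \<ge> 0"
    and jc: "j_Ccont0 h j"
  shows "F_Ccont0 h q j mu"
  unfolding F_Ccont0_def
proof (intro allI impI)
  fix e :: real assume e: "e > 0"
  obtain d where d: "d > 0" "\<forall>p\<in>Uplus h. N0 h p < d \<longrightarrow> \<bar>j p - j zst\<bar> < e/2"
    using jc e unfolding j_Ccont0_def by (meson half_gt_zero)
  define d' where "d' = min d (e / (2*(M+mu+1)))"
  have d'0: "d' > 0" using d e M mu by (simp add: d'_def)
  show "\<exists>d>0. \<forall>p\<in>Uplus h. N0 h p < d \<longrightarrow> norm (Fmap q j mu p - Fmap q j mu zst) < e"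
  proof (rule exI[of _ d'], intro conjI ballI impI d'0)
    fix p assume p: "p \<in> Uplus h" and n: "N0 h p < d'"
    have z: "(0::real) \<in> {-h..0}" using h by simp
    have b1: "\<bar>fst p 0\<bar> < d'" "\<bar>snd p 0\<bar> < d'" using Uplus_bounds(2,3)[OF h p z] n by auto
    have "snd p 0 \<ge> 0" using p z unfolding Uplus_def by auto
    then have qb: "\<bar>q (snd p 0)\<bar> \<le> M" using qM Rm by auto
    have jb: "\<bar>j p - j zst\<bar> < e/2" using d p n by (auto simp: d'_def)
    let ?a = "q (snd p 0) * fst p 0" and ?b = "j p - mu * snd p 0 - j zst"
    have eq: "Fmap q j mu p - Fmap q j mu zst = (?a, ?b)"
      by (simp add: Fmap_def zst_def)
    have "norm (?a, ?b) \<le> norm ?a + norm ?b" by (rule norm_Pair_le)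
    also have "norm ?a \<le> M * d'"
      using qb b1 M by (simp add: abs_mult) (meson abs_ge_zero less_imp_le mult_mono)
    also have "norm ?b \<le> \<bar>j p - j zst\<bar> + mu * d'"
    proof -
      have "norm ?b \<le> \<bar>j p - j zst\<bar> + \<bar>mu * snd p 0\<bar>" by simp
      moreover have "\<bar>mu * snd p 0\<bar> \<le> mu * d'" using b1 mu by (simp add: abs_mult)
      ultimately show ?thesis by linarith
    qed
    also have "M * d' + (\<bar>j p - j zst\<bar> + mu * d') < (M+mu) * d' + e/2"
      using jb by (simp add: algebra_simps)
    also have "(M+mu) * d' \<le> (M+mu) * (e / (2*(M+mu+1)))"
      using M mu by (intro mult_left_mono) (auto simp: d'_def)
    also have "(M+mu) * (e / (2*(M+mu+1))) \<le> e/2"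
      using M mu e by (simp add: field_simps)
    finally show "norm (Fmap q j mu p - Fmap q j mu zst) < e" using eq by simp
  qed
qed




context
  fixes h Rm mu :: real and q :: "real \<Rightarrow> real" and j :: "st \<Rightarrow> real" and sol :: "st \<Rightarrow> st"
  assumes h: "h > 0" and Rm: "Rm < 0" and mu: "mu > 0" and sf: "semiflow_hyps h Rm q j mu sol"
begin

lemma conv_from:
  assumes p: "p \<in> Xplus h q j mu" and qM: "\<forall>y>Rm. \<bar>q y\<bar> \<le> M" and M: "M \<ge> 0"
    and B: "\<forall>\<eta>>0. \<exists>T\<ge>0. \<forall>u\<ge>T. \<bar>fst (sol p) u\<bar> \<le> \<eta> \<and> \<bar>snd (sol p) u\<bar> \<le> \<eta> \<and> \<bar>j (seg (sol p) u)\<bar> \<le> \<eta>"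
  shows "conv_zero (N0 h) sol p \<and> conv_zero (N1 h) sol p"
proof -
  have main: "\<exists>T. \<forall>t\<ge>T. N0 h (seg (sol p) t) < e \<and> N1 h (seg (sol p) t) < e" if e: "e > 0" for e
  proof -
    define \<eta> where "\<eta> = e / (4 + M + mu)"
    have \<eta>: "\<eta> > 0" using e M mu by (simp add: \<eta>_def)
    obtain T where T: "T \<ge> 0" "\<forall>u\<ge>T. \<bar>fst (sol p) u\<bar> \<le> \<eta> \<and> \<bar>snd (sol p) u\<bar> \<le> \<eta> \<and> \<bar>j (seg (sol p) u)\<bar> \<le> \<eta>"
      using B \<eta> by blast
    have e1: "(3 + M + mu) * \<eta> < e" using e M mu by (simp add: \<eta>_def field_simps)
    have e2: "2 * \<eta> < e"
    proof -
      have "0 < M*e + (e*mu + e*2)" using e M mu by (intro add_nonneg_pos add_pos_pos) auto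
      then show ?thesis using e M mu by (simp add: \<eta>_def field_simps)
    qed
    show ?thesis
    proof (rule exI[of _ "T + h"], intro allI impI)
      fix t assume t: "t \<ge> T + h"
      note tl = tail[OF h Rm mu sf p qM M T(1) T(2) t]
      show "N0 h (seg (sol p) t) < e \<and> N1 h (seg (sol p) t) < e"
        using tl e1 e2 by (auto simp: algebra_simps)
    qed
  qed
  have nn: "0 \<le> N0 h (seg (sol p) t) \<and> N0 h (seg (sol p) t) \<le> N1 h (seg (sol p) t)" if "t \<ge> 0" for t
    using Uplus_bounds(5,6)[OF h seg_Uplus[OF h Rm mu sf p that]] by simp
  have "((\<lambda>t. N0 h (seg (sol p) t)) \<longlongrightarrow> 0) at_top \<and> ((\<lambda>t. N1 h (seg (sol p) t)) \<longlongrightarrow> 0) at_top"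
  proof (unfold tendsto_iff eventually_at_top_linorder dist_real_def, intro conjI allI impI)
    fix e :: real assume e: "e > 0"
    obtain T where T: "\<forall>t\<ge>T. N0 h (seg (sol p) t) < e \<and> N1 h (seg (sol p) t) < e" using main[OF e] by blast
    show "\<exists>N. \<forall>n\<ge>N. \<bar>N0 h (seg (sol p) n) - 0\<bar> < e"
      by (rule exI[of _ "max T 0"]) (use T nn in auto)
    show "\<exists>N. \<forall>n\<ge>N. \<bar>N1 h (seg (sol p) n) - 0\<bar> < e"
      apply (rule exI[of _ "max T 0"])
      using T nn by (metis abs_of_nonneg diff_zero max.boundedE order_trans)
  qed
  then show ?thesis unfolding conv_zero_def by simp
qed

lemma core_a:
  assumes p: "p \<in> Xplus h q j mu" and j0: "j zst = 0" and jc: "j_Ccont0 h j"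
    and c: "conv_zero (N0 h) sol p"
  shows "\<forall>\<eta>>0. \<exists>T\<ge>0. \<forall>u\<ge>T. \<bar>fst (sol p) u\<bar> \<le> \<eta> \<and> \<bar>snd (sol p) u\<bar> \<le> \<eta> \<and> \<bar>j (seg (sol p) u)\<bar> \<le> \<eta>"
proof (intro allI impI)
  fix \<eta> :: real assume \<eta>: "\<eta> > 0"
  obtain d where d: "d > 0" "\<forall>r\<in>Uplus h. N0 h r < d \<longrightarrow> \<bar>j r - j zst\<bar> < \<eta>"
    using jc \<eta> unfolding j_Ccont0_def by blast
  have "min \<eta> d > 0" using d \<eta> by simp
  then obtain T where T: "\<forall>t\<ge>T. \<bar>N0 h (seg (sol p) t) - 0\<bar> < min \<eta> d"
    using c unfolding conv_zero_def tendsto_iff eventually_at_top_linorder dist_real_def by blast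
  show "\<exists>T\<ge>0. \<forall>u\<ge>T. \<bar>fst (sol p) u\<bar> \<le> \<eta> \<and> \<bar>snd (sol p) u\<bar> \<le> \<eta> \<and> \<bar>j (seg (sol p) u)\<bar> \<le> \<eta>"
  proof (rule exI[of _ "max T 0"], intro conjI allI impI)
    fix u assume u: "max T 0 \<le> u"
    then have u0: "u \<ge> 0" and uT: "u \<ge> T" by auto
    have n: "N0 h (seg (sol p) u) < min \<eta> d" using T uT by fastforce
    show "\<bar>fst (sol p) u\<bar> \<le> \<eta>" using seg_vals0(1)[OF h Rm mu sf p u0] n by simp
    show "\<bar>snd (sol p) u\<bar> \<le> \<eta>" using seg_vals0(2)[OF h Rm mu sf p u0] n by simp
    show "\<bar>j (seg (sol p) u)\<bar> \<le> \<eta>" using d(2) seg_Uplus[OF h Rm mu sf p u0] n j0 by fastforce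
  qed simp
qed

end



context
  fixes h Rm mu :: real and q :: "real \<Rightarrow> real" and j :: "st \<Rightarrow> real" and sol :: "st \<Rightarrow> st"
  assumes h: "h > 0" and Rm: "Rm < 0" and mu: "mu > 0" and sf: "semiflow_hyps h Rm q j mu sol"
begin

lemma core_c:
  assumes p: "p \<in> Xplus h q j mu" and jnn: "\<forall>r\<in>Uplus h. j r \<ge> 0"
    and Hj: "\<forall>\<epsilon>>0. \<exists>\<delta>>0. \<forall>r\<in>Uplus h. n0 h (fst r) \<le> \<delta> \<longrightarrow> j r \<le> \<epsilon>"
    and w0: "(fst (sol p) \<longlongrightarrow> 0) at_top"
  shows "\<forall>\<eta>>0. \<exists>T\<ge>0. \<forall>u\<ge>T. \<bar>fst (sol p) u\<bar> \<le> \<eta> \<and> \<bar>snd (sol p) u\<bar> \<le> \<eta> \<and> \<bar>j (seg (sol p) u)\<bar> \<le> \<eta>"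
proof (intro allI impI)
  fix \<eta> :: real assume \<eta>: "\<eta> > 0"
  define c where "c = min \<eta> (mu * \<eta> / 2)"
  have c0: "c > 0" using \<eta> mu by (simp add: c_def)
  have cmu: "c / mu \<le> \<eta> / 2"
  proof -
    have "c \<le> mu * \<eta> / 2" by (simp add: c_def)
    then have "c / mu \<le> (mu * \<eta> / 2) / mu" using mu by (intro divide_right_mono) auto
    then show ?thesis using mu by simp
  qed
  have ceta: "c \<le> \<eta>" by (simp add: c_def)
  obtain dj where dj: "dj > 0" "\<forall>r\<in>Uplus h. n0 h (fst r) \<le> dj \<longrightarrow> j r \<le> c"
    using Hj c0 by blast
  have "min \<eta> dj > 0" using dj \<eta> by simp
  then obtain T1 where T1: "\<forall>u\<ge>T1. \<bar>fst (sol p) u - 0\<bar> < min \<eta> dj"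
    using w0 unfolding tendsto_iff eventually_at_top_linorder dist_real_def by blast
  define T2 where "T2 = max T1 0 + h"
  have T2: "T2 \<ge> 0" using h by (simp add: T2_def)
  have jb: "0 \<le> j (seg (sol p) u) \<and> j (seg (sol p) u) \<le> c" if u: "u \<ge> T2" for u
  proof -
    have u0: "u \<ge> 0" using u T2 by simp
    have U: "seg (sol p) u \<in> Uplus h" using seg_Uplus[OF h Rm mu sf p u0] .
    have "n0 h (fst (seg (sol p) u)) \<le> min \<eta> dj"
    proof (rule n0_upper)
      show "0 \<le> h" using h by simp
      show "\<forall>s\<in>{-h..0}. \<bar>fst (seg (sol p) u) s\<bar> \<le> min \<eta> dj"
      proof
        fix s assume s: "s \<in> {-h..0}"
        have "u + s \<ge> T1" using s u by (auto simp: T2_def)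
        then show "\<bar>fst (seg (sol p) u) s\<bar> \<le> min \<eta> dj" using T1 by (fastforce simp: seg_def)
      qed
    qed
    then show ?thesis using dj(2) U jnn by auto
  qed
  have vb: "snd (sol p) u \<le> c/mu + (snd (sol p) T2 - c/mu) * exp (-(mu*(u-T2)))" if u: "u \<ge> T2" for u
  proof (rule cmp[OF mu _ _ u])
    show "(snd (sol p) has_real_derivative (j (seg (sol p) y) - mu * snd (sol p) y)) (at y)" if "T2 \<le> y" for y
      using v_deriv[OF h Rm mu sf p] that T2 by simp
    show "j (seg (sol p) y) - mu * snd (sol p) y \<le> c - mu * snd (sol p) y" if "T2 \<le> y" for y
      using jb that by simp
  qed
  define K where "K = \<bar>snd (sol p) T2 - c/mu\<bar>"
  define T3 where "T3 = T2 + 2*K/(\<eta>*mu)"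
  have K0: "K \<ge> 0" by (simp add: K_def)
  have T3: "T3 \<ge> T2" using K0 \<eta> mu by (simp add: T3_def)
  show "\<exists>T\<ge>0. \<forall>u\<ge>T. \<bar>fst (sol p) u\<bar> \<le> \<eta> \<and> \<bar>snd (sol p) u\<bar> \<le> \<eta> \<and> \<bar>j (seg (sol p) u)\<bar> \<le> \<eta>"
  proof (rule exI[of _ T3], intro conjI allI impI)
    show "T3 \<ge> 0" using T2 T3 by simp
    fix u assume u: "T3 \<le> u"
    have uT2: "u \<ge> T2" using u T3 by simp
    have u0: "u \<ge> 0" using uT2 T2 by simp
    have "u \<ge> T1" using uT2 by (simp add: T2_def) (use h in linarith)
    then show "\<bar>fst (sol p) u\<bar> \<le> \<eta>" using T1 by fastforce
    show "\<bar>j (seg (sol p) u)\<bar> \<le> \<eta>" using jb[OF uT2] ceta by simp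
    define y where "y = mu * (u - T2)"
    have y: "y \<ge> 2*K/\<eta>"
    proof -
      have "mu * (u - T2) \<ge> mu * (2*K/(\<eta>*mu))" using u mu by (intro mult_left_mono) (auto simp: T3_def)
      then show ?thesis using mu by (simp add: y_def)
    qed
    have "exp y \<ge> 1 + y" by (rule exp_ge_add_one_self)
    then have "y \<le> exp y" by linarith
    then have ey: "\<eta> * y \<le> \<eta> * exp y" using \<eta> by (intro mult_left_mono) auto
    have "\<eta> * y \<ge> 2 * K" using y \<eta> by (simp add: field_simps)
    then have "\<eta>/2 * exp y \<ge> K" using ey by linarith
    then have k1: "K * exp (-y) \<le> \<eta>/2" by (simp add: exp_minus field_simps)
    have k2: "(snd (sol p) T2 - c/mu) * exp (-y) \<le> K * exp (-y)"
      by (intro mult_right_mono) (auto simp: K_def)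
    have k3: "snd (sol p) u \<le> c/mu + (snd (sol p) T2 - c/mu) * exp (-y)" using vb[OF uT2] by (simp add: y_def)
    have "snd (sol p) u \<le> \<eta>" using k1 k2 k3 cmu by linarith
    moreover have "0 \<le> snd (sol p) u" using seg_vals0(3)[OF h Rm mu sf p u0] .
    ultimately show "\<bar>snd (sol p) u\<bar> \<le> \<eta>" by simp
  qed
qed

end



context
  fixes h Rm mu :: real and q :: "real \<Rightarrow> real" and j :: "st \<Rightarrow> real" and sol :: "st \<Rightarrow> st"
  assumes h: "h > 0" and Rm: "Rm < 0" and mu: "mu > 0" and sf: "semiflow_hyps h Rm q j mu sol"
begin

lemma core_b:
  assumes E: "E \<subseteq> Xplus h q j mu" and jnn: "\<forall>r\<in>Uplus h. j r \<ge> 0"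
    and Hj: "\<forall>\<epsilon>>0. \<exists>\<delta>>0. \<forall>r\<in>Uplus h. n0 h (fst r) \<le> \<delta> \<longrightarrow> j r \<le> \<epsilon>"
    and HE: "\<forall>p\<in>E. \<forall>t\<ge>0. n0 h (fst (seg (sol p) t)) \<le> n0 h (fst p)"
    and \<eta>: "\<eta> > 0"
  shows "\<exists>\<delta>>0. \<forall>p\<in>E. N0 h p < \<delta> \<longrightarrow>
     (\<forall>u\<ge>0. \<bar>fst (sol p) u\<bar> \<le> \<eta> \<and> \<bar>snd (sol p) u\<bar> \<le> \<eta> \<and> \<bar>j (seg (sol p) u)\<bar> \<le> \<eta>) \<and>
     (\<forall>t\<ge>0. N0 h (seg (sol p) t) \<le> 2 * \<eta>)"
proof -
  define c where "c = min \<eta> (mu * \<eta>)"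
  have c0: "c > 0" using \<eta> mu by (simp add: c_def)
  have cmu: "c / mu \<le> \<eta>"
  proof -
    have "c \<le> mu * \<eta>" by (simp add: c_def)
    then have "c / mu \<le> (mu * \<eta>) / mu" using mu by (intro divide_right_mono) auto
    then show ?thesis using mu by simp
  qed
  have ceta: "c \<le> \<eta>" by (simp add: c_def)
  obtain dj where dj: "dj > 0" "\<forall>r\<in>Uplus h. n0 h (fst r) \<le> dj \<longrightarrow> j r \<le> c"
    using Hj c0 by blast
  show ?thesis
  proof (rule exI[of _ "min dj \<eta>"], intro conjI ballI impI)
    show "min dj \<eta> > 0" using dj \<eta> by simp
    fix p assume pE: "p \<in> E" and n: "N0 h p < min dj \<eta>"
    have p: "p \<in> Xplus h q j mu" using pE E by auto
    have U: "p \<in> Uplus h" using p X_Uplus[OF h Rm mu sf] by auto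
    have n0p: "n0 h (fst p) \<le> N0 h p" using Uplus_bounds(9)[OF h U] .
    have z: "(0::real) \<in> {-h..0}" using h by simp
    have jb: "0 \<le> j (seg (sol p) u) \<and> j (seg (sol p) u) \<le> c" if u: "u \<ge> 0" for u
    proof -
      have "n0 h (fst (seg (sol p) u)) \<le> dj" using HE pE u n0p n by fastforce
      then show ?thesis using dj(2) jnn seg_Uplus[OF h Rm mu sf p u] by auto
    qed
    have wb: "\<bar>fst (sol p) u\<bar> \<le> \<eta>" if u: "u \<ge> 0" for u
      using seg_vals0(4)[OF h Rm mu sf p u] HE pE u n0p n by fastforce
    have v0: "snd (sol p) 0 < \<eta>"
      using sol_init(2)[OF h Rm mu sf p z] Uplus_bounds(3)[OF h U z] n abs_ge_self[of "snd p 0"] by linarith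
    have vb: "\<bar>snd (sol p) u\<bar> \<le> \<eta>" if u: "u \<ge> 0" for u
    proof -
      have k: "snd (sol p) u \<le> c/mu + (snd (sol p) 0 - c/mu) * exp (-(mu*(u-0)))"
      proof (rule cmp[OF mu _ _ u])
        show "(snd (sol p) has_real_derivative (j (seg (sol p) y) - mu * snd (sol p) y)) (at y)" if "0 \<le> y" for y
          using v_deriv[OF h Rm mu sf p] that by simp
        show "j (seg (sol p) y) - mu * snd (sol p) y \<le> c - mu * snd (sol p) y" if "0 \<le> y" for y
          using jb that by simp
      qed
      have e1: "exp (-(mu*(u-0))) \<le> 1" using mu u by simp
      have "snd (sol p) u \<le> \<eta>"
      proof (cases "snd (sol p) 0 \<le> c/mu")
        case True
        then have "(snd (sol p) 0 - c/mu) * exp (-(mu*(u-0))) \<le> 0"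
          by (intro mult_nonpos_nonneg) auto
        then show ?thesis using k cmu by linarith
      next
        case False
        then have "(snd (sol p) 0 - c/mu) * exp (-(mu*(u-0))) \<le> (snd (sol p) 0 - c/mu)"
          using mult_left_mono[OF e1, of "snd (sol p) 0 - c/mu"] by simp
        then show ?thesis using k v0 by linarith
      qed
      moreover have "0 \<le> snd (sol p) u" using seg_vals0(3)[OF h Rm mu sf p u] .
      ultimately show ?thesis by simp
    qed
    show "\<forall>u\<ge>0. \<bar>fst (sol p) u\<bar> \<le> \<eta> \<and> \<bar>snd (sol p) u\<bar> \<le> \<eta> \<and> \<bar>j (seg (sol p) u)\<bar> \<le> \<eta>"
      using wb vb jb ceta by fastforce
    show "\<forall>t\<ge>0. N0 h (seg (sol p) t) \<le> 2 * \<eta>"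
    proof (intro allI impI)
      fix t :: real assume t: "t \<ge> 0"
      have "N0 h (seg (sol p) t) \<le> \<eta> + \<eta>"
      proof (rule N0_seg_le[OF h Rm mu sf], intro ballI)
        fix s assume s: "s \<in> {-h..0}"
        show "\<bar>fst (sol p) (t+s)\<bar> \<le> \<eta> \<and> \<bar>snd (sol p) (t+s)\<bar> \<le> \<eta>"
        proof (cases "t + s \<ge> 0")
          case True then show ?thesis using wb vb by blast
        next
          case False
          then have ts: "t + s \<in> {-h..0}" using s t by auto
          show ?thesis using sol_init[OF h Rm mu sf p ts] Uplus_bounds(2,3)[OF h U ts] n by auto
        qed
      qed
      then show "N0 h (seg (sol p) t) \<le> 2 * \<eta>" by simp
    qed
  qed
qed

lemma stab_a:
  assumes E: "E \<subseteq> Xplus h q j mu" and qM: "\<forall>y>Rm. \<bar>q y\<bar> \<le> M" and M: "M \<ge> 0"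
    and j0: "j zst = 0" and jc: "j_Ccont0 h j" and st: "stable_on (N0 h) sol E"
  shows "stable_on (N1 h) sol E"
  unfolding stable_on_def
proof (intro allI impI)
  fix e :: real assume e: "e > 0"
  define \<eta> where "\<eta> = e / (2 + M + mu)"
  have \<eta>: "\<eta> > 0" using e M mu by (simp add: \<eta>_def)
  have e1: "(2 + M + mu) * \<eta> = e" using e M mu by (simp add: \<eta>_def field_simps)
  have e2: "\<eta> \<le> (1 + M + mu) * \<eta>" using \<eta> M mu by (simp add: algebra_simps)
  obtain dj where dj: "dj > 0" "\<forall>r\<in>Uplus h. N0 h r < dj \<longrightarrow> \<bar>j r - j zst\<bar> < \<eta>"
    using jc \<eta> unfolding j_Ccont0_def by blast
  have "min \<eta> dj > 0" using \<eta> dj by simp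
  then obtain d0 where d0: "d0 > 0" "\<forall>p\<in>E. N0 h p < d0 \<longrightarrow> (\<forall>t\<ge>0. N0 h (seg (sol p) t) < min \<eta> dj)"
    using st unfolding stable_on_def by blast
  show "\<exists>\<delta>>0. \<forall>p\<in>E. N1 h p < \<delta> \<longrightarrow> (\<forall>t\<ge>0. N1 h (seg (sol p) t) < e)"
  proof (rule exI[of _ "min d0 \<eta>"], intro conjI ballI impI allI)
    show "min d0 \<eta> > 0" using d0 \<eta> by simp
    fix p and t :: real assume pE: "p \<in> E" and n: "N1 h p < min d0 \<eta>" and t: "0 \<le> t"
    have p: "p \<in> Xplus h q j mu" using pE E by auto
    have U: "p \<in> Uplus h" using p X_Uplus[OF h Rm mu sf] by auto
    have "N0 h p < d0" using Uplus_bounds(6)[OF h U] n by simp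
    then have all: "\<forall>t\<ge>0. N0 h (seg (sol p) t) < min \<eta> dj" using d0 pE by blast
    have B: "\<forall>u\<ge>0. \<bar>fst (sol p) u\<bar> \<le> \<eta> \<and> \<bar>snd (sol p) u\<bar> \<le> \<eta> \<and> \<bar>j (seg (sol p) u)\<bar> \<le> \<eta>"
    proof (intro allI impI conjI)
      fix u :: real assume u: "u \<ge> 0"
      have nu: "N0 h (seg (sol p) u) < min \<eta> dj" using all u by blast
      show "\<bar>fst (sol p) u\<bar> \<le> \<eta>" using seg_vals0(1)[OF h Rm mu sf p u] nu by simp
      show "\<bar>snd (sol p) u\<bar> \<le> \<eta>" using seg_vals0(2)[OF h Rm mu sf p u] nu by simp
      show "\<bar>j (seg (sol p) u)\<bar> \<le> \<eta>" using dj(2) seg_Uplus[OF h Rm mu sf p u] nu j0 by fastforce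
    qed
    have s1: "N1 h (seg (sol p) t) \<le> N0 h (seg (sol p) t) + max (N1 h p) (M*\<eta> + \<eta> + mu*\<eta>)"
      using stabN1[OF h Rm mu sf p qM M B t] .
    have s2: "N0 h (seg (sol p) t) < \<eta>" using all t by simp
    have s3: "max (N1 h p) (M*\<eta> + \<eta> + mu*\<eta>) \<le> (1 + M + mu) * \<eta>"
      using n e2 by (simp add: algebra_simps)
    show "N1 h (seg (sol p) t) < e" using s1 s2 s3 e1 by (simp add: algebra_simps)
  qed
qed

lemma stab_b:
  assumes E: "E \<subseteq> Xplus h q j mu" and qM: "\<forall>y>Rm. \<bar>q y\<bar> \<le> M" and M: "M \<ge> 0"
    and jnn: "\<forall>r\<in>Uplus h. j r \<ge> 0"
    and Hj: "\<forall>\<epsilon>>0. \<exists>\<delta>>0. \<forall>r\<in>Uplus h. n0 h (fst r) \<le> \<delta> \<longrightarrow> j r \<le> \<epsilon>"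
    and HE: "\<forall>p\<in>E. \<forall>t\<ge>0. n0 h (fst (seg (sol p) t)) \<le> n0 h (fst p)"
  shows "stable_on (N0 h) sol E \<and> stable_on (N1 h) sol E"
proof
  show "stable_on (N0 h) sol E"
    unfolding stable_on_def
  proof (intro allI impI)
    fix e :: real assume e: "e > 0"
    then have "e/3 > 0" by simp
    from core_b[OF E jnn Hj HE this] obtain d where d: "d > 0"
      "\<forall>p\<in>E. N0 h p < d \<longrightarrow> (\<forall>t\<ge>0. N0 h (seg (sol p) t) \<le> 2 * (e/3))" by blast
    show "\<exists>\<delta>>0. \<forall>p\<in>E. N0 h p < \<delta> \<longrightarrow> (\<forall>t\<ge>0. N0 h (seg (sol p) t) < e)"
      using d e by (intro exI[of _ d]) fastforce
  qed
  show "stable_on (N1 h) sol E"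
    unfolding stable_on_def
  proof (intro allI impI)
    fix e :: real assume e: "e > 0"
    define \<eta> where "\<eta> = e / (4 + M + mu)"
    have \<eta>: "\<eta> > 0" using e M mu by (simp add: \<eta>_def)
    have e1: "(3 + M + mu) * \<eta> < e"
    proof -
      have "(4 + M + mu) * \<eta> = e" using e M mu by (simp add: \<eta>_def field_simps)
      then show ?thesis using \<eta> by (simp add: algebra_simps)
    qed
    have e2: "\<eta> \<le> (1 + M + mu) * \<eta>" using \<eta> M mu by (simp add: algebra_simps)
    from core_b[OF E jnn Hj HE \<eta>] obtain d where d: "d > 0"
      "\<forall>p\<in>E. N0 h p < d \<longrightarrow> (\<forall>u\<ge>0. \<bar>fst (sol p) u\<bar> \<le> \<eta> \<and> \<bar>snd (sol p) u\<bar> \<le> \<eta> \<and> \<bar>j (seg (sol p) u)\<bar> \<le> \<eta>) \<and>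
         (\<forall>t\<ge>0. N0 h (seg (sol p) t) \<le> 2 * \<eta>)" by blast
    show "\<exists>\<delta>>0. \<forall>p\<in>E. N1 h p < \<delta> \<longrightarrow> (\<forall>t\<ge>0. N1 h (seg (sol p) t) < e)"
    proof (rule exI[of _ "min d \<eta>"], intro conjI ballI impI allI)
      show "min d \<eta> > 0" using d \<eta> by simp
      fix p and t :: real assume pE: "p \<in> E" and n: "N1 h p < min d \<eta>" and t: "0 \<le> t"
      have p: "p \<in> Xplus h q j mu" using pE E by auto
      have U: "p \<in> Uplus h" using p X_Uplus[OF h Rm mu sf] by auto
      have "N0 h p < d" using Uplus_bounds(6)[OF h U] n by simp
      then have B: "\<forall>u\<ge>0. \<bar>fst (sol p) u\<bar> \<le> \<eta> \<and> \<bar>snd (sol p) u\<bar> \<le> \<eta> \<and> \<bar>j (seg (sol p) u)\<bar> \<le> \<eta>"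
        and s2: "N0 h (seg (sol p) t) \<le> 2 * \<eta>" using d pE t by blast+
      have s1: "N1 h (seg (sol p) t) \<le> N0 h (seg (sol p) t) + max (N1 h p) (M*\<eta> + \<eta> + mu*\<eta>)"
        using stabN1[OF h Rm mu sf p qM M B t] .
      have s3: "max (N1 h p) (M*\<eta> + \<eta> + mu*\<eta>) \<le> (1 + M + mu) * \<eta>"
        using n e2 by (simp add: algebra_simps)
      show "N1 h (seg (sol p) t) < e" using s1 s2 s3 e1 by (simp add: algebra_simps)
    qed
  qed
qed

end


theorem lemma9:
  fixes h Rm mu :: real and q :: "real \<Rightarrow> real" and j :: "st \<Rightarrow> real" and sol :: "st \<Rightarrow> st"
  assumes "h > 0" and "Rm < 0" and "mu > 0"
    and "q_hyps Rm q" and "j_hyps h Rm j"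
    and "semiflow_hyps h Rm q j mu sol"
  defines "X \<equiv> Xplus h q j mu"
  shows
   \<comment> \<open>(a)\<close>
   "((j zst = 0 \<longleftrightarrow> Fmap q j mu zst = 0) \<and>
     (Fmap q j mu zst = 0 \<longleftrightarrow> zst \<in> X) \<and>
     (zst \<in> X \<longleftrightarrow> is_sol h Rm q j mu zst zst))
  \<and> (j zst = 0 \<longrightarrow> X \<noteq> {})
  \<and> (j_Ccont0 h j \<longrightarrow> F_Ccont0 h q j mu)
  \<and> (j zst = 0 \<and> j_Ccont0 h j \<longrightarrow>
       (\<forall>p\<in>X. conv_zero (N0 h) sol p \<longrightarrow> conv_zero (N1 h) sol p)
     \<and> (glob_attr (N0 h) sol X \<longrightarrow> glob_attr (N1 h) sol X)
     \<and> (\<forall>E\<subseteq>X. stable_on (N0 h) sol E \<longrightarrow> stable_on (N1 h) sol E)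
     \<and> (GAS (N0 h) sol X \<longrightarrow> GAS (N1 h) sol X))
  \<and> (j zst = 0 \<and> (\<forall>\<epsilon>>0. \<exists>\<delta>>0. \<forall>p\<in>Uplus h. n0 h (fst p) \<le> \<delta> \<longrightarrow> j p \<le> \<epsilon>) \<longrightarrow>
       \<comment> \<open>(b)\<close>
       (\<forall>E. E \<subseteq> X \<and> zst \<in> E \<and>
            (\<forall>p\<in>E. \<forall>t\<ge>0. n0 h (fst (seg (sol p) t)) \<le> n0 h (fst p)) \<longrightarrow>
            stable_on (N0 h) sol E \<and> stable_on (N1 h) sol E)
       \<comment> \<open>(c)\<close>
     \<and> (\<forall>p\<in>X. (fst (sol p) \<longlongrightarrow> 0) at_top \<longrightarrow> conv_zero (N0 h) sol p \<and> conv_zero (N1 h) sol p)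
     \<and> ((\<forall>p\<in>X. (fst (sol p) \<longlongrightarrow> 0) at_top) \<longrightarrow> glob_attr (N0 h) sol X \<and> glob_attr (N1 h) sol X))"
proof -
  obtain M0 where qM: "\<forall>y>Rm. \<bar>q y\<bar> \<le> M0" using assms(4) unfolding q_hyps_def by blast
  have M0: "M0 \<ge> 0" using qM assms(2) by (meson abs_ge_zero order_trans)
  have jnn: "\<forall>r\<in>Uplus h. j r \<ge> 0" using assms(5) unfolding j_hyps_def by blast
  note h = assms(1) and Rm = assms(2) and mu = assms(3) and sf = assms(6)
  have A1: "j zst = 0 \<longleftrightarrow> Fmap q j mu zst = 0"
    using zst_facts(1)[OF h, of q j mu] by (simp add: zero_prod_def)
  have A2: "zst \<in> X \<longleftrightarrow> j zst = 0" unfolding X_def using zst_X[OF h] .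
  have A3: "is_sol h Rm q j mu zst zst \<longleftrightarrow> j zst = 0" using zst_sol[OF h Rm] .
  have A5: "j_Ccont0 h j \<longrightarrow> F_Ccont0 h q j mu" using F_cont[OF h Rm mu qM M0] by blast
  have A6: "(\<forall>p\<in>X. conv_zero (N0 h) sol p \<longrightarrow> conv_zero (N1 h) sol p)
     \<and> (glob_attr (N0 h) sol X \<longrightarrow> glob_attr (N1 h) sol X)
     \<and> (\<forall>E\<subseteq>X. stable_on (N0 h) sol E \<longrightarrow> stable_on (N1 h) sol E)
     \<and> (GAS (N0 h) sol X \<longrightarrow> GAS (N1 h) sol X)" if j0: "j zst = 0" and jc: "j_Ccont0 h j"
  proof -
    have c: "\<forall>p\<in>X. conv_zero (N0 h) sol p \<longrightarrow> conv_zero (N1 h) sol p"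
    proof (intro ballI impI)
      fix p assume p: "p \<in> X" and cz: "conv_zero (N0 h) sol p"
      have pX: "p \<in> Xplus h q j mu" using p X_def by simp
      show "conv_zero (N1 h) sol p"
        using conv_from[OF h Rm mu sf pX qM M0 core_a[OF h Rm mu sf pX j0 jc cz]] by blast
    qed
    have g: "glob_attr (N0 h) sol X \<longrightarrow> glob_attr (N1 h) sol X"
      using c unfolding glob_attr_def by blast
    have s: "\<forall>E\<subseteq>X. stable_on (N0 h) sol E \<longrightarrow> stable_on (N1 h) sol E"
      using stab_a[OF h Rm mu sf _ qM M0 j0 jc] X_def by blast
    have "GAS (N0 h) sol X \<longrightarrow> GAS (N1 h) sol X"
      using g s unfolding GAS_def by blast
    then show ?thesis using c g s by blast
  qed
  have BC: "(\<forall>E. E \<subseteq> X \<and> zst \<in> E \<and>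
            (\<forall>p\<in>E. \<forall>t\<ge>0. n0 h (fst (seg (sol p) t)) \<le> n0 h (fst p)) \<longrightarrow>
            stable_on (N0 h) sol E \<and> stable_on (N1 h) sol E)
     \<and> (\<forall>p\<in>X. (fst (sol p) \<longlongrightarrow> 0) at_top \<longrightarrow> conv_zero (N0 h) sol p \<and> conv_zero (N1 h) sol p)
     \<and> ((\<forall>p\<in>X. (fst (sol p) \<longlongrightarrow> 0) at_top) \<longrightarrow> glob_attr (N0 h) sol X \<and> glob_attr (N1 h) sol X)"
    if Hj: "\<forall>\<epsilon>>0. \<exists>\<delta>>0. \<forall>p\<in>Uplus h. n0 h (fst p) \<le> \<delta> \<longrightarrow> j p \<le> \<epsilon>"
  proof -
    have b: "\<forall>E. E \<subseteq> X \<and> zst \<in> E \<and>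
            (\<forall>p\<in>E. \<forall>t\<ge>0. n0 h (fst (seg (sol p) t)) \<le> n0 h (fst p)) \<longrightarrow>
            stable_on (N0 h) sol E \<and> stable_on (N1 h) sol E"
    proof (intro allI impI)
      fix E assume E: "E \<subseteq> X \<and> zst \<in> E \<and> (\<forall>p\<in>E. \<forall>t\<ge>0. n0 h (fst (seg (sol p) t)) \<le> n0 h (fst p))"
      have EX: "E \<subseteq> Xplus h q j mu" using E X_def by simp
      show "stable_on (N0 h) sol E \<and> stable_on (N1 h) sol E"
        using stab_b[OF h Rm mu sf EX qM M0 jnn Hj] E by blast
    qed
    have c: "\<forall>p\<in>X. (fst (sol p) \<longlongrightarrow> 0) at_top \<longrightarrow> conv_zero (N0 h) sol p \<and> conv_zero (N1 h) sol p"
    proof (intro ballI impI)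
      fix p assume p: "p \<in> X" and w0: "(fst (sol p) \<longlongrightarrow> 0) at_top"
      have pX: "p \<in> Xplus h q j mu" using p X_def by simp
      show "conv_zero (N0 h) sol p \<and> conv_zero (N1 h) sol p"
        using conv_from[OF h Rm mu sf pX qM M0 core_c[OF h Rm mu sf pX jnn Hj w0]] .
    qed
    then show ?thesis using b unfolding glob_attr_def by blast
  qed
  show ?thesis using A1 A2 A3 A5 A6 BC by blast
qed

end
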